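(* Let $N=1$, assume (H-EL), let $u_0\in\mathcal A$ and let $u$ be the solution of $(P_{u_0})$, with $\operatorname{supp}u=[-\bar r,\bar r]$. Then, as $x\to\bar r^-$, $$u(x)\sim\Big(\tfrac{A(m+1)^2}{2}\Big)^{\frac1{m+1}}(\bar r-x)^{\frac2{m+1}},\qquad u'(x)\sim-\tfrac{2}{m+1}\Big(\tfrac{A(m+1)^2}{2}\Big)^{\frac1{m+1}}(\bar r-x)^{\frac2{m+1}-1}.$$ In particular $u\in H^1_0((-\bar r,\bar r))$.
   Context: Hypothesis (H-EL): $Q\in C^1((0,+\infty))$, $Q\equiv0$ on $(-\infty,0]$, $\inf Q>-\infty$, $Q(u)\sim Au^{1-m}$ as $u\to0^+$ with $A>0$, $1<m<3$, and $|sQ'(s)|\le CQ(s)$ for small $s>0$. $R(s)=Q(s)/s$. $(P_{u_0})$: $-u''+Q'(u)=R(u_0)$ in $\{u>0\}$, $u(0)=u_0$, $u'(0)=0$. $\mathcal A=\{s>0: R'(s)<0,\ R(t)>R(s)\ \forall t\in(0,s)\}$; for $u_0\in\mathcal A$ the solution of $(P_{u_0})$ is even with compact support $[-\bar r,\bar r]$ and strictly decreasing on $(0,\bar r)$. *)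

theory Defs
  imports "HOL-Analysis.Analysis" "HOL-Library.Landau_Symbols"
begin

definition H_EL :: "(real \<Rightarrow> real) \<Rightarrow> real \<Rightarrow> real \<Rightarrow> bool" where
  "H_EL Q A m \<longleftrightarrow>
     (\<forall>s>0. Q differentiable (at s)) \<and> continuous_on {0<..} (deriv Q) \<and>
     (\<forall>s\<le>0. Q s = 0) \<and>
     bdd_below (range Q) \<and>
     A > 0 \<and> 1 < m \<and> m < 3 \<and>
     (Q \<sim>[at_right 0] (\<lambda>s. A * s powr (1 - m))) \<and>
     (\<exists>C \<delta>. \<delta> > 0 \<and> (\<forall>s\<in>{0<..<\<delta>}. \<bar>s * deriv Q s\<bar> \<le> C * Q s))"

definition Rfun :: "(real \<Rightarrow> real) \<Rightarrow> real \<Rightarrow> real" where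
  "Rfun Q s = Q s / s"

definition setA :: "(real \<Rightarrow> real) \<Rightarrow> real set" where
  "setA Q = {s. s > 0 \<and> deriv (Rfun Q) s < 0 \<and> (\<forall>t\<in>{0<..<s}. Rfun Q t > Rfun Q s)}"

definition solves_P :: "(real \<Rightarrow> real) \<Rightarrow> real \<Rightarrow> (real \<Rightarrow> real) \<Rightarrow> bool" where
  "solves_P Q u0 u \<longleftrightarrow>
     continuous_on UNIV u \<and> (\<forall>x. u x \<ge> 0) \<and>
     (\<forall>x. u x > 0 \<longrightarrow>
        (u has_real_derivative deriv u x) (at x) \<and>
        (deriv u has_real_derivative deriv (deriv u) x) (at x) \<and>
        - deriv (deriv u) x + deriv Q (u x) = Rfun Q u0) \<and>
     u 0 = u0 \<and> deriv u 0 = 0"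

text \<open>H^1_0((a,b)) in dimension one, via the standard characterization: v vanishes at
  a and b and is the primitive of a square-integrable function on [a,b].\<close>
definition H1_0_interval :: "(real \<Rightarrow> real) \<Rightarrow> real \<Rightarrow> real \<Rightarrow> bool" where
  "H1_0_interval v a b \<longleftrightarrow>
     (\<exists>g. set_integrable lborel {a..b} g \<and>
          set_integrable lborel {a..b} (\<lambda>x. (g x)\<^sup>2) \<and>
          v b = 0 \<and>
          (\<forall>x\<in>{a..b}. v x = (LBINT t:{a..x}. g t)))"

end

theory Submission
  imports Defs
begin


lemma powr_int_right:
  fixes a b e :: real
  assumes e: "e > -1" and ab: "a \<le> b"
  shows "(\<lambda>x. (b - x) powr e) integrable_on {a..b}"
proof -
  define F where "F x = - ((b - x) powr (e + 1) / (e + 1))" for x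
  have "((\<lambda>x. (b - x) powr e) has_integral (F b - F a)) {a..b}"
  proof (rule fundamental_theorem_of_calculus_interior[OF ab])
    have "continuous_on {a..b} (\<lambda>x. (b - x) powr (e + 1))"
      by (rule continuous_on_powr') (use e in \<open>auto intro!: continuous_intros\<close>)
    then show "continuous_on {a..b} F" unfolding F_def[abs_def]
      by (intro continuous_on_minus continuous_on_divide continuous_on_const) (use e in auto)
  next
    fix x assume x: "x \<in> {a<..<b}"
    have "((\<lambda>x. b - x) has_real_derivative -1) (at x)" by (auto intro!: derivative_eq_intros)
    from DERIV_fun_powr[OF this, of "e + 1"] x
    have "((\<lambda>x. (b - x) powr (e + 1)) has_real_derivative (e + 1) * (b - x) powr e * -1) (at x)"
      by simp
    then have "(F has_real_derivative (b - x) powr e) (at x)"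
      unfolding F_def[abs_def] using e x by (auto intro!: derivative_eq_intros)
    then show "(F has_vector_derivative (b - x) powr e) (at x)"
      by (simp add: has_real_derivative_iff_has_vector_derivative)
  qed
  then show ?thesis by blast
qed

lemma powr_int_left:
  fixes a b e :: real
  assumes e: "e > -1" and ab: "a \<le> b"
  shows "(\<lambda>x. (x - a) powr e) integrable_on {a..b}"
proof -
  define F where "F x = (x - a) powr (e + 1) / (e + 1)" for x
  have "((\<lambda>x. (x - a) powr e) has_integral (F b - F a)) {a..b}"
  proof (rule fundamental_theorem_of_calculus_interior[OF ab])
    have "continuous_on {a..b} (\<lambda>x. (x - a) powr (e + 1))"
      by (rule continuous_on_powr') (use e in \<open>auto intro!: continuous_intros\<close>)
    then show "continuous_on {a..b} F" unfolding F_def[abs_def]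
      by (intro continuous_on_minus continuous_on_divide continuous_on_const) (use e in auto)
  next
    fix x assume x: "x \<in> {a<..<b}"
    have "((\<lambda>x. x - a) has_real_derivative 1) (at x)" by (auto intro!: derivative_eq_intros)
    from DERIV_fun_powr[OF this, of "e + 1"] x
    have "((\<lambda>x. (x - a) powr (e + 1)) has_real_derivative (e + 1) * (x - a) powr e * 1) (at x)"
      by simp
    then have "(F has_real_derivative (x - a) powr e) (at x)"
      unfolding F_def[abs_def] using e x by (auto intro!: derivative_eq_intros)
    then show "(F has_vector_derivative (x - a) powr e) (at x)"
      by (simp add: has_real_derivative_iff_has_vector_derivative)
  qed
  then show ?thesis by blast
qed

lemma abs_le_1_sq: "\<bar>y::real\<bar> \<le> 1 + y^2"
proof (cases "\<bar>y\<bar> \<le> 1")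
  case True then show ?thesis using zero_le_power2[of y] by linarith
next
  case False
  then have "\<bar>y\<bar> * 1 \<le> \<bar>y\<bar> * \<bar>y\<bar>" by (intro mult_left_mono) auto
  then show ?thesis by (simp add: power2_eq_square abs_mult_self_eq)
qed

lemma absint_lborel:
  fixes f :: "real \<Rightarrow> real"
  assumes "f absolutely_integrable_on S" "S \<in> sets borel" "f \<in> borel_measurable borel"
  shows "set_integrable lborel S f"
proof -
  have m: "(\<lambda>x. indicator S x *\<^sub>R f x) \<in> borel_measurable lborel"
    using assms(2,3) by measurable
  show ?thesis using assms(1) integrable_completion[OF m]
    by (simp add: set_integrable_def)
qed


theorem mainTheorem8:
  fixes Q u :: "real \<Rightarrow> real" and A m u0 rbar :: real
  assumes HEL: "H_EL Q A m"
    and u0A: "u0 \<in> setA Q"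
    and sol: "solves_P Q u0 u"
    and supp: "closure {x. u x \<noteq> 0} = {-rbar..rbar}"
    and rpos: "rbar > 0"
    and even: "\<forall>x. u (-x) = u x"
    and decr: "strict_antimono_on {0<..<rbar} u"
  shows "(u \<sim>[at_left rbar]
           (\<lambda>x. (A * (m + 1)\<^sup>2 / 2) powr (1 / (m + 1)) * (rbar - x) powr (2 / (m + 1)))) \<and>
         (deriv u \<sim>[at_left rbar]
           (\<lambda>x. - (2 / (m + 1)) * (A * (m + 1)\<^sup>2 / 2) powr (1 / (m + 1))
                 * (rbar - x) powr (2 / (m + 1) - 1))) \<and>
         H1_0_interval u (-rbar) rbar"
proof -
  have u0pos: "u0 > 0" using u0A by (simp add: setA_def)
  have Apos: "A > 0" and m1: "1 < m" and m3: "m < 3" using HEL by (auto simp: H_EL_def)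
  have Qdiff: "\<And>s. s > 0 \<Longrightarrow> (Q has_real_derivative deriv Q s) (at s)"
    using HEL by (auto simp: H_EL_def DERIV_deriv_iff_real_differentiable)
  have Qequiv: "Q \<sim>[at_right 0] (\<lambda>s. A * s powr (1 - m))" using HEL by (simp add: H_EL_def)
  have ucont: "continuous_on UNIV u" and unonneg: "\<And>x. u x \<ge> 0"
    and u00: "u 0 = u0" and du00: "deriv u 0 = 0"
    using sol by (auto simp: solves_P_def)
  have ode: "\<And>x. u x > 0 \<Longrightarrow> (u has_real_derivative deriv u x) (at x) \<and>
        (deriv u has_real_derivative deriv (deriv u) x) (at x) \<and>
        - deriv (deriv u) x + deriv Q (u x) = Rfun Q u0"
    using sol by (simp add: solves_P_def)
  have uout: "u x = 0" if "\<bar>x\<bar> > rbar" for x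
  proof (rule ccontr)
    assume "u x \<noteq> 0"
    then have "x \<in> closure {x. u x \<noteq> 0}" using closure_subset[of "{x. u x \<noteq> 0}"] by (simp add: subset_iff)
    with supp have "x \<in> {-rbar..rbar}" by simp
    then show False using that by (auto simp: abs_if split: if_split_asm)
  qed
  have isc: "isCont u x" for x using ucont by (simp add: continuous_on_eq_continuous_at)
  have urbar: "u rbar = 0"
  proof -
    have L: "(u \<longlongrightarrow> u rbar) (at_right rbar)"
      using isc[of rbar] by (simp add: isCont_def filterlim_at_split)
    have Ez: "eventually (\<lambda>x. u x = 0) (at_right rbar)"
    proof -
      have "eventually (\<lambda>x. x \<in> {rbar<..<rbar+1}) (at_right rbar)"
        by (rule eventually_at_right_real) simp
      then show ?thesis by eventually_elim (use rpos in \<open>auto intro!: uout\<close>)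
    qed
    have "((\<lambda>x. 0) \<longlongrightarrow> u rbar) (at_right rbar)"
      using L tendsto_cong[OF Ez] by blast
    then show ?thesis by (simp add: tendsto_const_iff)
  qed
  have upos0: "u y > 0" if y: "0 \<le> y" "y < rbar" for y
  proof (cases "y = 0")
    case True then show ?thesis using u00 u0pos by simp
  next
    case False
    then have "u ((y + rbar)/2) < u y"
      using monotone_onD[OF decr, of y "(y+rbar)/2"] y by auto
    then show ?thesis using unonneg[of "(y + rbar)/2"] by linarith
  qed
  have upos: "u x > 0" if "\<bar>x\<bar> < rbar" for x
  proof (cases "x \<ge> 0")
    case True then show ?thesis using that upos0 by simp
  next
    case False
    then have "u (-x) > 0" using that upos0 by simp
    then show ?thesis using even by simp
  qed
  define R0 where "R0 = Rfun Q u0"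
  have du: "(u has_real_derivative deriv u x) (at x)" if "\<bar>x\<bar> < rbar" for x
    using ode[OF upos[OF that]] by blast
  have ddu: "(deriv u has_real_derivative deriv (deriv u) x) (at x)" if "\<bar>x\<bar> < rbar" for x
    using ode[OF upos[OF that]] by blast
  have odeq: "deriv (deriv u) x = deriv Q (u x) - R0" if "\<bar>x\<bar> < rbar" for x
    using ode[OF upos[OF that]] unfolding R0_def by linarith
  define E where "E x = (deriv u x)^2/2 - Q (u x) + R0 * u x" for x
  have Eder: "(E has_real_derivative 0) (at x)" if "x \<in> {-rbar<..<rbar}" for x
  proof -
    from that have ax: "\<bar>x\<bar> < rbar" by auto
    have hQu: "((\<lambda>x. Q (u x)) has_real_derivative deriv Q (u x) * deriv u x) (at x)"
      by (rule DERIV_chain2[OF Qdiff[OF upos[OF ax]] du[OF ax]])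
    have "(E has_real_derivative
        (deriv u x * deriv (deriv u) x - deriv Q (u x) * deriv u x + R0 * deriv u x)) (at x)"
      unfolding E_def[abs_def]
      by (auto intro!: derivative_eq_intros ddu[OF ax] du[OF ax] hQu)
    moreover have "deriv u x * deriv (deriv u) x - deriv Q (u x) * deriv u x + R0 * deriv u x = 0"
      unfolding odeq[OF ax] by (simp add: algebra_simps)
    ultimately show ?thesis by simp
  qed
  obtain c where c: "\<forall>x\<in>{-rbar<..<rbar}. E x = c"
    using has_field_derivative_zero_constant[of "{-rbar<..<rbar}" E] Eder
      has_field_derivative_at_within by blast
  have E0: "E 0 = 0" using u00 du00 u0pos by (simp add: E_def R0_def Rfun_def)
  have energy: "(deriv u x)^2 = 2 * (Q (u x) - R0 * u x)" if "\<bar>x\<bar> < rbar" for x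
  proof -
    have "E x = E 0" using c that rpos by (auto simp: abs_less_iff)
    then have "(deriv u x)^2/2 - Q (u x) + R0 * u x = 0" using E0 by (simp add: E_def)
    then show ?thesis by (simp add: field_simps)
  qed
  have duneg: "deriv u x \<le> 0" if x: "0 < x" "x < rbar" for x
  proof (rule ccontr)
    assume "\<not> deriv u x \<le> 0"
    moreover have "\<bar>x\<bar> < rbar" using x by simp
    ultimately obtain d where d: "d > 0" "\<forall>h>0. h < d \<longrightarrow> u x < u (x + h)"
      using DERIV_pos_inc_right[OF du] by force
    define h where "h = min (d/2) ((rbar - x)/2)"
    have h: "h > 0" "h < d" "x + h < rbar" using d x by (auto simp: h_def min_def field_simps)
    then have "u (x+h) < u x" using monotone_onD[OF decr, of x "x+h"] x by auto
    with d h show False by force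
  qed
  have ulim: "(u \<longlongrightarrow> 0) (at_left rbar)"
    using isc[of rbar] urbar by (simp add: isCont_def filterlim_at_split)
  have ev: "eventually (\<lambda>x. x \<in> {0<..<rbar}) (at_left rbar)"
    by (rule eventually_at_left_real) (rule rpos)
  have evpos: "eventually (\<lambda>x. u x > 0) (at_left rbar)"
    using ev by eventually_elim (auto intro!: upos)
  have ufilt: "filterlim u (at_right 0) (at_left rbar)"
  proof -
    have "eventually (\<lambda>x. u x \<in> {0<..} \<and> u x \<noteq> 0) (at_left rbar)"
      using evpos by eventually_elim auto
    then show ?thesis unfolding filterlim_at using ulim by blast
  qed
  have Qlim0: "((\<lambda>s. Q s / (A * s powr (1 - m))) \<longlongrightarrow> 1) (at_right 0)"
  proof (rule asymp_equivD_strong[OF Qequiv])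
    have "eventually (\<lambda>s. s \<in> {0<..<1}) (at_right (0::real))"
      by (rule eventually_at_right_real) simp
    then show "eventually (\<lambda>s. Q s \<noteq> 0 \<or> A * s powr (1 - m) \<noteq> 0) (at_right 0)"
      by eventually_elim (use Apos in auto)
  qed
  define L where "L x = Q (u x) / (A * u x powr (1 - m))" for x
  have Llim: "(L \<longlongrightarrow> 1) (at_left rbar)"
    unfolding L_def using filterlim_compose[OF Qlim0 ufilt] by simp
  define p where "p = (m + 1) / 2"
  define a where "a = 2 / (m + 1)"
  have ppos: "p > 1" using m1 by (simp add: p_def)
  have apos: "a > 0" using m1 by (simp add: a_def)
  have a_eq: "a = 1 / p" by (simp add: a_def p_def)
  have pa: "p * a = 1" using ppos by (simp add: a_eq)
  have pa1: "p * (1 - a) = p - 1" using pa by (simp add: algebra_simps)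
  define w where "w x = u x powr p" for x
  define w' where "w' x = p * u x powr (p - 1) * deriv u x" for x
  have wder: "(w has_real_derivative w' x) (at x)" if "\<bar>x\<bar> < rbar" for x
    using DERIV_fun_powr[OF du[OF that] upos[OF that], of p] unfolding w_def[abs_def] w'_def by simp
  have w'sq: "(w' x)^2 = 2 * p^2 * (A * L x - R0 * u x powr m)" if x: "0 < x" "x < rbar" for x
  proof -
    have ax: "\<bar>x\<bar> < rbar" using x by simp
    have U: "u x > 0" using upos[OF ax] .
    have e1: "(u x powr (p - 1))^2 = u x powr (m - 1)"
    proof -
      have "(u x powr (p - 1))^2 = u x powr ((p - 1) + (p - 1))"
        by (simp only: power2_eq_square powr_add[symmetric])
      also have "(p - 1) + (p - 1) = m - 1" by (simp add: p_def field_simps)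
      finally show ?thesis .
    qed
    have inv: "u x powr (m - 1) = inverse (u x powr (1 - m))"
      using powr_minus[of "u x" "1 - m"] by simp
    have e2: "u x powr (m - 1) * Q (u x) = A * L x"
      using U Apos by (simp add: L_def inv field_simps)
    have e3: "u x powr (m - 1) * u x = u x powr m"
    proof -
      have "u x powr (m - 1) * u x = u x powr (m - 1) * u x powr 1" using U by (simp add: abs_of_pos)
      also have "... = u x powr m" by (simp only: powr_add[symmetric]) simp
      finally show ?thesis .
    qed
    have "(w' x)^2 = p^2 * (u x powr (p - 1))^2 * (deriv u x)^2"
      by (simp add: w'_def power_mult_distrib)
    also have "... = p^2 * u x powr (m-1) * (2 * (Q (u x) - R0 * u x))"
      by (simp add: e1 energy[OF ax])
    also have "... = 2 * p^2 * (u x powr (m - 1) * Q (u x) - R0 * (u x powr (m - 1) * u x))"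
      by (simp add: algebra_simps)
    also have "... = 2 * p^2 * (A * L x - R0 * u x powr m)" by (simp add: e2 e3)
    finally show ?thesis .
  qed
  have um: "((\<lambda>x. u x powr m) \<longlongrightarrow> 0) (at_left rbar)"
    by (rule tendsto_zero_powrI[OF ulim tendsto_const]) (use unonneg m1 in auto)
  have sqlim: "((\<lambda>x. 2 * p^2 * (A * L x - R0 * u x powr m)) \<longlongrightarrow> 2 * p^2 * (A * 1 - R0 * 0)) (at_left rbar)"
    by (intro tendsto_mult[OF tendsto_const] tendsto_diff tendsto_mult[OF tendsto_const Llim]
        tendsto_mult[OF tendsto_const um])
  define k where "k = p * sqrt (2 * A)"
  have kpos: "k > 0" using ppos Apos by (simp add: k_def)
  have k2: "2 * p^2 * (A * 1 - R0 * 0) = k^2"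
    using Apos by (simp add: k_def power_mult_distrib)
  have w'eq: "eventually (\<lambda>x. - sqrt (2 * p^2 * (A * L x - R0 * u x powr m)) = w' x) (at_left rbar)"
    using ev
  proof eventually_elim
    case (elim x)
    then have "w' x \<le> 0" using duneg[of x] ppos
      by (auto simp: w'_def intro!: mult_nonneg_nonpos)
    have "sqrt (2 * p^2 * (A * L x - R0 * u x powr m)) = sqrt ((w' x)^2)"
      using elim by (simp only: w'sq[of x] greaterThanLessThan_iff)
    also have "... = - w' x" using \<open>w' x \<le> 0\<close> by simp
    finally show ?case by simp
  qed
  have w'lim: "(w' \<longlongrightarrow> -k) (at_left rbar)"
  proof -
    have "((\<lambda>x. - sqrt (2 * p^2 * (A * L x - R0 * u x powr m))) \<longlongrightarrow> - sqrt (k^2)) (at_left rbar)"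
      using sqlim unfolding k2 by (intro tendsto_intros)
    then have "((\<lambda>x. - sqrt (2 * p^2 * (A * L x - R0 * u x powr m))) \<longlongrightarrow> - k) (at_left rbar)"
      using kpos by simp
    then show ?thesis using tendsto_cong[OF w'eq] by blast
  qed
  have wlim0: "(w \<longlongrightarrow> 0) (at_left rbar)" unfolding w_def[abs_def]
    by (rule tendsto_zero_powrI[OF ulim tendsto_const]) (use unonneg ppos in auto)
  have dlim0: "((\<lambda>x. rbar - x) \<longlongrightarrow> 0) (at_left rbar)"
  proof -
    have "((\<lambda>x. rbar - x) \<longlongrightarrow> rbar - rbar) (at_left rbar)"
      by (intro tendsto_intros)
    then show ?thesis by simp
  qed
  have qlim: "((\<lambda>x. w x / (rbar - x)) \<longlongrightarrow> k) (at_left rbar)"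
  proof (rule lhopital_left[OF wlim0 dlim0, where f' = w' and g' = "\<lambda>x. -1"])
    show "eventually (\<lambda>x. rbar - x \<noteq> 0) (at_left rbar)" using ev by eventually_elim auto
    show "eventually (\<lambda>x. (-1::real) \<noteq> 0) (at_left rbar)" by simp
    show "eventually (\<lambda>x. DERIV w x :> w' x) (at_left rbar)"
      using ev by eventually_elim (auto intro!: wder)
    show "eventually (\<lambda>x. DERIV (\<lambda>x. rbar - x) x :> -1) (at_left rbar)"
      by (intro always_eventually allI) (auto intro!: derivative_eq_intros)
    show "((\<lambda>x. w' x / -1) \<longlongrightarrow> k) (at_left rbar)" using tendsto_minus[OF w'lim] by simp
  qed
  define K where "K = (A * (m + 1)^2 / 2) powr (1 / (m + 1))"
  have Kk: "K = k powr a"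
  proof -
    have kk: "k^2 = A * (m + 1)^2 / 2"
    proof -
      have "k^2 = p^2 * (2*A)" using Apos by (simp add: k_def power_mult_distrib)
      also have "p^2 = (m+1)^2/4" by (simp add: p_def power_divide)
      finally show ?thesis by simp
    qed
    have "k powr a = (k powr 2) powr (1 / (m + 1))" by (simp add: a_def powr_powr)
    moreover have "k powr 2 = k^2" using kpos by simp
    ultimately show ?thesis by (simp add: kk K_def)
  qed
  have Kpos: "K > 0" using kpos by (simp add: Kk)
  have lim1: "((\<lambda>x. u x / (K * (rbar - x) powr a)) \<longlongrightarrow> 1) (at_left rbar)"
  proof -
    have "((\<lambda>x. (w x / (rbar - x)) powr a) \<longlongrightarrow> k powr a) (at_left rbar)"
      by (rule tendsto_powr[OF qlim tendsto_const]) (use kpos in simp)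
    then have "((\<lambda>x. (w x / (rbar - x)) powr a / K) \<longlongrightarrow> k powr a / K) (at_left rbar)"
      by (rule tendsto_divide[OF _ tendsto_const]) (use Kpos in simp)
    then have l: "((\<lambda>x. (w x / (rbar - x)) powr a / K) \<longlongrightarrow> 1) (at_left rbar)"
      using Kpos by (simp add: Kk)
    have "eventually (\<lambda>x. (w x / (rbar - x)) powr a / K = u x / (K * (rbar - x) powr a)) (at_left rbar)"
      using ev
    proof eventually_elim
      case (elim x)
      then have U: "u x > 0" by (auto intro!: upos)
      have D: "rbar - x > 0" using elim by simp
      have "(w x / (rbar - x)) powr a = u x / (rbar - x) powr a"
        using U by (simp add: powr_divide w_def powr_powr pa abs_of_pos)
      then show ?case using Kpos D by (simp add: field_simps)
    qed
    from tendsto_cong[OF this] l show ?thesis by blast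
  qed
  have lim2: "((\<lambda>x. deriv u x / (- a * K * (rbar - x) powr (a - 1))) \<longlongrightarrow> 1) (at_left rbar)"
  proof -
    have "((\<lambda>x. (w x / (rbar - x)) powr (1 - a)) \<longlongrightarrow> k powr (1 - a)) (at_left rbar)"
      by (rule tendsto_powr[OF qlim tendsto_const]) (use kpos in simp)
    then have "((\<lambda>x. - w' x / (K * (w x / (rbar - x)) powr (1 - a))) \<longlongrightarrow> - (- k) / (K * k powr (1 - a))) (at_left rbar)"
      by (intro tendsto_divide tendsto_minus w'lim tendsto_mult[OF tendsto_const]) (use kpos Kpos in simp_all)
    moreover have "- (- k) / (K * k powr (1 - a)) = 1"
    proof -
      have "K * k powr (1 - a) = k powr (a + (1 - a))" by (simp only: Kk powr_add)
      also have "... = k" using kpos by simp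
      finally show ?thesis using kpos by simp
    qed
    ultimately have l: "((\<lambda>x. - w' x / (K * (w x / (rbar - x)) powr (1 - a))) \<longlongrightarrow> 1) (at_left rbar)"
      by simp
    have "eventually (\<lambda>x. - w' x / (K * (w x / (rbar - x)) powr (1 - a)) =
        deriv u x / (- a * K * (rbar - x) powr (a - 1))) (at_left rbar)"
      using ev
    proof eventually_elim
      case (elim x)
      then have U: "u x > 0" by (auto intro!: upos)
      have D: "rbar - x > 0" using elim by simp
      have 1: "(w x / (rbar - x)) powr (1 - a) = u x powr (p - 1) / (rbar - x) powr (1 - a)"
        using U by (simp add: powr_divide w_def powr_powr pa1)
      have 2: "(rbar - x) powr (a - 1) = inverse ((rbar - x) powr (1 - a))"
        by (metis minus_diff_eq powr_minus)
      have Vp: "u x powr (p - 1) > 0" using U by simp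
      have Dp: "(rbar - x) powr (1 - a) > 0" using D by simp
      show ?case unfolding 1 2 w'_def using Vp Dp Kpos ppos
        by (simp add: a_eq field_simps)
    qed
    from tendsto_cong[OF this] l show ?thesis by blast
  qed
  have part1: "u \<sim>[at_left rbar] (\<lambda>x. K * (rbar - x) powr a)"
    by (rule asymp_equivI'[OF lim1])
  have part2: "deriv u \<sim>[at_left rbar] (\<lambda>x. - a * K * (rbar - x) powr (a - 1))"
    by (rule asymp_equivI'[OF lim2])
  have part3: "H1_0_interval u (-rbar) rbar"
  proof -
    define g where "g x = indicator {-rbar<..<rbar} x *\<^sub>R deriv u x" for x
    have g_in: "g x = deriv u x" if "\<bar>x\<bar> < rbar" for x
      using that by (simp add: g_def abs_less_iff indicator_def)
    have g_out: "g x = 0" if "\<not> \<bar>x\<bar> < rbar" for x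
      using that by (auto simp: g_def abs_less_iff indicator_def)
    have dcont: "continuous_on {-rbar<..<rbar} (deriv u)"
      by (rule continuous_at_imp_continuous_on) (auto intro!: DERIV_isCont ddu simp: abs_less_iff)
    have gmeas: "g \<in> borel_measurable borel"
      unfolding g_def[abs_def] by (rule borel_measurable_continuous_on_indicator[OF _ dcont]) simp
    define gam where "gam = 2 * (a - 1)"
    define cc where "cc = 4 * a^2 * K^2"
    have mp: "m + 1 > 0" using m1 by simp
    have ahalf: "a > 1/2" using m3 mp by (simp add: a_def field_simps)
    have gam1: "gam > -1" using ahalf unfolding gam_def by (simp add: algebra_simps)
    have ccnn: "cc \<ge> 0" by (simp add: cc_def)
    have evb: "eventually (\<lambda>x. (deriv u x)^2 \<le> cc * (rbar - x) powr gam) (at_left rbar)"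
    proof -
      have "eventually (\<lambda>x. deriv u x / (- a * K * (rbar - x) powr (a - 1)) < 2) (at_left rbar)"
        using order_tendstoD(2)[OF lim2, of 2] by simp
      with ev show ?thesis
      proof eventually_elim
        case (elim x)
        define T where "T = - a * K * (rbar - x) powr (a - 1)"
        have D: "rbar - x > 0" using elim by simp
        have Tneg: "T < 0" using D apos Kpos by (simp add: T_def zero_less_mult_iff)
        have dn: "deriv u x \<le> 0" using duneg elim by simp
        have "deriv u x / T < 2" using elim by (simp add: T_def)
        then have "2 * T < deriv u x" using Tneg by (simp add: divide_less_eq)
        then have "(- deriv u x)^2 \<le> (- (2 * T))^2"
          by (intro power_mono) (use dn in linarith)+
        then have "(deriv u x)^2 \<le> (2 * T)^2" by simp
        also have "(2 * T)^2 = cc * (rbar - x) powr gam"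
        proof -
          have ga: "gam = (a - 1) + (a - 1)" unfolding gam_def by (simp add: algebra_simps)
          have "((rbar - x) powr (a - 1))^2 = (rbar - x) powr gam"
            unfolding ga by (simp only: power2_eq_square powr_add[symmetric])
          then show ?thesis by (simp add: T_def cc_def power_mult_distrib)
        qed
        finally show ?case .
      qed
    qed
    obtain b where b: "b < rbar" "\<And>y. b < y \<Longrightarrow> y < rbar \<Longrightarrow> (deriv u y)^2 \<le> cc * (rbar - y) powr gam"
      using evb unfolding eventually_at_left_field by blast
    define t0 where "t0 = max b (rbar/2)"
    have t0: "0 < t0" "t0 < rbar" "b \<le> t0" using b rpos by (auto simp: t0_def)
    have "continuous_on {-t0..t0} (deriv u)"
      by (rule continuous_on_subset[OF dcont]) (use t0 in auto)
    then obtain M where M: "\<And>x. x \<in> {-t0..t0} \<Longrightarrow> norm (deriv u x) \<le> M"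
      using continuous_on_compact_bound[OF compact_Icc] by blast
    have dodd: "deriv u (-x) = - deriv u x" if "\<bar>x\<bar> < rbar" for x
    proof -
      have "DERIV u (-x) :> deriv u (-x)" using du[of "-x"] that by simp
      then have "DERIV (\<lambda>y. u (-y)) x :> - deriv u (-x)"
        using DERIV_mirror[of u "deriv u (-x)" x] by blast
      moreover have "(\<lambda>y. u (-y)) = u" using even by auto
      ultimately have "DERIV u x :> - deriv u (-x)" by simp
      from DERIV_unique[OF du[OF that] this] show ?thesis by simp
    qed
    define H where "H x = (1 + M^2) + (cc * (rbar - x) powr gam + cc * (x - (-rbar)) powr gam)" for x
    have mM: "M^2 \<ge> 0" by simp
    have gbound: "(g x)^2 \<le> M^2 + cc * (rbar - x) powr gam + cc * (x - (-rbar)) powr gam"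
      if x: "x \<in> {-rbar..rbar}" for x
    proof -
      have n1: "cc * (rbar - x) powr gam \<ge> 0" and n2: "cc * (x - (-rbar)) powr gam \<ge> 0"
        using ccnn by simp_all
      show ?thesis
      proof (cases "\<bar>x\<bar> < rbar")
        case False then show ?thesis using n1 n2 g_out[OF False] mM by (simp only: g_out[OF False] power_zero_numeral)
      next
        case True
        note gx = g_in[OF True]
        show ?thesis
        proof (cases "t0 < x")
          case True
          then have "(deriv u x)^2 \<le> cc * (rbar - x) powr gam" using b(2)[of x] t0 x \<open>\<bar>x\<bar> < rbar\<close> by (simp add: abs_less_iff)
          then show ?thesis using gx n2 mM by (simp only: gx; linarith?)
        next
          case False
          show ?thesis
          proof (cases "x < -t0")
            case True
            then have "(deriv u (-x))^2 \<le> cc * (rbar - (-x)) powr gam" using b(2)[of "-x"] t0 x \<open>\<bar>x\<bar> < rbar\<close> by (simp add: abs_less_iff)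
            then have "(deriv u x)^2 \<le> cc * (x - (-rbar)) powr gam"
              using dodd[OF \<open>\<bar>x\<bar> < rbar\<close>] by (simp add: add.commute)
            then show ?thesis using gx n1 mM by (simp only: gx; linarith?)
          next
            case False
            then have "x \<in> {-t0..t0}" using \<open>\<not> t0 < x\<close> by simp
            then have "\<bar>deriv u x\<bar> \<le> M" using M by simp
            then have "\<bar>deriv u x\<bar>^2 \<le> M^2" by (intro power_mono) simp_all
            then show ?thesis using gx n1 n2 by simp
          qed
        qed
      qed
    qed
    have Hint_hk: "H integrable_on {-rbar..rbar}"
    proof -
      have i1: "(\<lambda>x. (rbar - x) powr gam) integrable_on {-rbar..rbar}"
        by (rule powr_int_right[OF gam1]) (use rpos in simp)
      have i2: "(\<lambda>x. (x - (-rbar)) powr gam) integrable_on {-rbar..rbar}"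
        by (rule powr_int_left[OF gam1]) (use rpos in simp)
      show ?thesis unfolding H_def[abs_def]
        by (intro integrable_add integrable_const_ivl integrable_on_mult_right i1 i2)
    qed
    have Hge: "H x \<ge> 1 + (g x)^2" if "x \<in> {-rbar..rbar}" for x
      using gbound[OF that] by (simp add: H_def)
    have Hnn: "H x \<ge> 0" if "x \<in> {-rbar..rbar}" for x
      using Hge[OF that] zero_le_power2[of "g x"] by linarith
    have Habs: "H absolutely_integrable_on {-rbar..rbar}"
      by (rule nonnegative_absolutely_integrable_1[OF Hint_hk]) (use Hnn in auto)
    have Hmeas: "H \<in> borel_measurable borel" unfolding H_def[abs_def] by measurable
    have Hint: "set_integrable lborel {-rbar..rbar} H"
      by (rule absint_lborel[OF Habs _ Hmeas]) simp
    have gmeas': "g \<in> borel_measurable lborel" using gmeas by simp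
    have g2int: "set_integrable lborel {-rbar..rbar} (\<lambda>x. (g x)^2)"
    proof (rule set_integrable_bound[OF Hint])
      show "set_borel_measurable lborel {-rbar..rbar} (\<lambda>x. (g x)^2)"
        unfolding set_borel_measurable_def using gmeas' by measurable
      have "norm ((g x)^2) \<le> norm (H x)" if "x \<in> {-rbar..rbar}" for x
        using Hge[OF that] Hnn[OF that] zero_le_power2[of "g x"] by (simp add: abs_of_nonneg)
      then show "AE x in lborel. x \<in> {-rbar..rbar} \<longrightarrow> norm ((g x)^2) \<le> norm (H x)"
        by (intro AE_I2) blast
    qed
    have gint: "set_integrable lborel {-rbar..rbar} g"
    proof (rule set_integrable_bound[OF Hint])
      show "set_borel_measurable lborel {-rbar..rbar} g"
        unfolding set_borel_measurable_def using gmeas' by measurable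
      have "norm (g x) \<le> norm (H x)" if "x \<in> {-rbar..rbar}" for x
        using Hge[OF that] Hnn[OF that] abs_le_1_sq[of "g x"] by (simp add: abs_of_nonneg)
      then show "AE x in lborel. x \<in> {-rbar..rbar} \<longrightarrow> norm (g x) \<le> norm (H x)"
        by (intro AE_I2) blast
    qed
    have um: "u (-rbar) = 0" using even urbar by simp
    have FTC: "u x = (LBINT t:{-rbar..x}. g t)" if x: "x \<in> {-rbar..rbar}" for x
    proof -
      have "(g has_integral (u x - u (-rbar))) {-rbar..x}"
      proof (rule fundamental_theorem_of_calculus_interior)
        show "-rbar \<le> x" using x by simp
        show "continuous_on {-rbar..x} u" using ucont continuous_on_subset by blast
        fix y assume y: "y \<in> {-rbar<..<x}"
        then have ay: "\<bar>y\<bar> < rbar" using x by (auto simp: abs_less_iff)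
        show "(u has_vector_derivative g y) (at y)"
          using du[OF ay] g_in[OF ay] by (simp add: has_real_derivative_iff_has_vector_derivative)
      qed
      then have hi: "(g has_integral u x) {-rbar..x}" using um by simp
      have si: "set_integrable lborel {-rbar..x} g"
        by (rule set_integrable_subset[OF gint]) (use x in auto)
      have "(LBINT t:{-rbar..x}. g t) = integral {-rbar..x} g"
        using set_borel_integral_eq_integral(2)[OF si] .
      also have "... = u x" using hi by (rule integral_unique)
      finally show ?thesis by simp
    qed
    show ?thesis unfolding H1_0_interval_def using gint g2int urbar FTC by blast
  qed
  show ?thesis using part1 part2 part3 unfolding K_def a_def by blast
qed

end
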